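(* Let $q$ be a prime power with $q\equiv 1\pmod 3$, and let $t_1\in GF(q)$ be a root of $t^2+t+1=0$. Suppose $\pi\in AGL(1,q)$, $\pi(x)=ax+r$, is not an isolated vertex of $C_A(q)$. Then the neighbors of $\pi$ in $C_A(q)$ are exactly $\sigma_1$ and $\sigma_2$, where $\sigma_1(x)=at_1x+(a-t_1)F+r(1+t_1)$ and $\sigma_2(x)=a t_1^{-1}x+(a-t_1^{-1})F+r(1+t_1^{-1})$. In particular every non-isolated vertex of $C_A(q)$ has degree $2$.
   Context: $AGL(1,q)=\{x\mapsto ax+b: a\in GF(q)\setminus\{0\}, b\in GF(q)\}$, acting on $GF(q)$. For permutations $\pi,\sigma$ of a finite set, $hd(\pi,\sigma)$ is the number of points at which they differ. Fix a distinguished element $F\in GF(q)$. For a permutation $\pi$ of $GF(q)$, $\pi^{\triangle}$ is the permutation with $\pi^{\triangle}(\pi^{-1}(F))=\pi(F)$, $\pi^{\triangle}(F)=F$, and $\pi^{\triangle}(x)=\pi(x)$ otherwise. The contraction graph $C_A(q)$ has vertex set $AGL(1,q)$, with distinct $\pi,\sigma$ adjacent iff $hd(\pi^{\triangle},\sigma^{\triangle})=q-4$. *)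

theory Defs
  imports Main
begin

text \<open>GF(q) is modelled as a finite field type 'a with q = CARD('a).\<close>

definition AGL1 :: "('a::field \<Rightarrow> 'a) set" where
  "AGL1 = {\<pi>. \<exists>a b. a \<noteq> 0 \<and> \<pi> = (\<lambda>x. a * x + b)}"

definition hd :: "('a::finite \<Rightarrow> 'b) \<Rightarrow> ('a \<Rightarrow> 'b) \<Rightarrow> nat" where
  "hd \<pi> \<sigma> = card {x. \<pi> x \<noteq> \<sigma> x}"

definition contr :: "'a \<Rightarrow> ('a \<Rightarrow> 'a) \<Rightarrow> ('a \<Rightarrow> 'a)" where
  "contr F \<pi> x = (if x = F then F else if \<pi> x = F then \<pi> F else \<pi> x)"

definition CA_adj :: "'a::{field,finite} \<Rightarrow> ('a \<Rightarrow> 'a) \<Rightarrow> ('a \<Rightarrow> 'a) \<Rightarrow> bool" where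
  "CA_adj F \<pi> \<sigma> \<longleftrightarrow> \<pi> \<in> AGL1 \<and> \<sigma> \<in> AGL1 \<and> \<pi> \<noteq> \<sigma> \<and>
     hd (contr F \<pi>) (contr F \<sigma>) = card (UNIV :: 'a set) - 4"

end

theory Submission
  imports Defs
begin

lemma ofnat_card_zero: "of_nat (card (UNIV::'a::{field,finite} set)) = (0::'a)"
proof -
  have "(\<Sum>x\<in>(UNIV::'a set). x) = (\<Sum>x\<in>UNIV. x + 1)"
    by (rule sum.reindex_bij_witness[where i="\<lambda>x. x + 1" and j="\<lambda>x. x - 1"]) simp_all
  also have "\<dots> = (\<Sum>x\<in>UNIV. x) + of_nat (card (UNIV::'a set))"
    by (simp add: sum.distrib)
  finally show ?thesis by simp
qed

lemma three_nz:
  assumes "card (UNIV :: 'a::{field,finite} set) mod 3 = 1"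
  shows "(3::'a) \<noteq> 0"
proof
  assume h: "(3::'a) = 0"
  obtain m where m: "card (UNIV::'a set) = 3*m+1" using assms by (metis mod_div_mult_eq add.commute mult.commute)
  have "(of_nat (card (UNIV::'a set))::'a) = 3 * of_nat m + 1" by (simp add: m)
  also have "\<dots> = 1" using h by simp
  finally show False using ofnat_card_zero[where 'a='a] by simp
qed

lemma card4_distinct:
  assumes "card {w,x,y,z} = 4"
  shows "w\<noteq>x \<and> w\<noteq>y \<and> w\<noteq>z \<and> x\<noteq>y \<and> x\<noteq>z \<and> y\<noteq>z"
  using assms by (cases "w=x"; cases "w=y"; cases "w=z"; cases "x=y"; cases "x=z"; cases "y=z") (simp_all add: card_insert_if)

lemma card3_le: "card {x,y,z} \<le> 3"
  by (auto simp: card_insert_if)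

lemma card4_le: "card {w,x,y,z} \<le> 4"
  by (auto simp: card_insert_if)

lemma hd_eq: "hd (f::'a::finite \<Rightarrow> 'b) g = card (UNIV::'a set) - card {x. f x = g x}"
proof -
  have "{x. f x \<noteq> g x} = UNIV - {x. f x = g x}" by auto
  then show ?thesis unfolding hd_def by (simp add: card_Diff_subset)
qed


lemma A_sub:
  fixes a b r s F :: "'a::{field,finite}"
  assumes "a \<noteq> 0" "b \<noteq> 0"
  shows "{x. contr F (\<lambda>x. a*x+r) x = contr F (\<lambda>x. b*x+s) x}
         \<subseteq> {F, (F-r)/a, (F-s)/b} \<union> {x. a*x+r = b*x+s}"
proof
  fix x assume x: "x \<in> {x. contr F (\<lambda>x. a*x+r) x = contr F (\<lambda>x. b*x+s) x}"
  show "x \<in> {F, (F-r)/a, (F-s)/b} \<union> {x. a*x+r = b*x+s}"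
  proof (cases "x = F \<or> x = (F-r)/a \<or> x = (F-s)/b")
    case True then show ?thesis by auto
  next
    case False
    then have "a*x+r \<noteq> F" "b*x+s \<noteq> F" using assms by (auto simp: field_simps)
    then show ?thesis using x False by (auto simp: contr_def)
  qed
qed

lemma core_fwd:
  fixes a b r s F :: "'a::{field,finite}"
  assumes a: "a \<noteq> 0" and b: "b \<noteq> 0" and ne: "\<not> (a = b \<and> r = s)"
    and c4: "card {x. contr F (\<lambda>x. a*x+r) x = contr F (\<lambda>x. b*x+s) x} = 4"
  shows "a*F+r \<noteq> F \<and> (b/a)^2 + b/a + 1 = 0 \<and> s = (a - b/a)*F + r*(1+b/a)"
proof -
  define A where "A = {x. contr F (\<lambda>x. a*x+r) x = contr F (\<lambda>x. b*x+s) x}"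
  define u where "u = (F-r)/a"
  define v where "v = (F-s)/b"
  have sub: "A \<subseteq> {F,u,v} \<union> {x. a*x+r = b*x+s}" unfolding A_def u_def v_def using A_sub[OF a b] .
  have pu: "\<And>x. a*x+r = F \<longleftrightarrow> x = u" using a unfolding u_def by (auto simp: field_simps)
  have pv: "\<And>x. b*x+s = F \<longleftrightarrow> x = v" using b unfolding v_def by (auto simp: field_simps)
  have ab: "a \<noteq> b"
  proof
    assume "a = b"
    then have "r \<noteq> s" using ne by auto
    then have "{x. a*x+r = b*x+s} = {}" using \<open>a = b\<close> by auto
    then have "A \<subseteq> {F,u,v}" using sub by auto
    then have "card A \<le> 3" by (meson card3_le card_mono finite order_trans)
    then show False using c4 unfolding A_def by simp
  qed
  define x0 where "x0 = (s-r)/(a-b)"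
  have "{x. a*x+r = b*x+s} = {x0}" using ab unfolding x0_def by (auto simp: field_simps)
  then have sub2: "A \<subseteq> {F,u,v,x0}" using sub by auto
  have "card A \<le> card {F,u,v,x0}" using sub2 by (simp add: card_mono)
  then have cB: "card {F,u,v,x0} = 4" using card4_le[of F u v x0] c4 unfolding A_def by simp
  then have AB: "A = {F,u,v,x0}" using sub2 c4 unfolding A_def
    by (metis card_subset_eq finite)
  have d: "F\<noteq>u \<and> F\<noteq>v \<and> F\<noteq>x0 \<and> u\<noteq>v \<and> u\<noteq>x0 \<and> v\<noteq>x0" using card4_distinct[OF cB] .
  have "u \<in> A" using AB by auto
  then have su: "b*u+s = a*F+r" using d pu pv unfolding A_def contr_def by (auto split: if_splits)
  have "v \<in> A" using AB by auto
  then have sv: "a*v+r = b*F+s" using d pu pv unfolding A_def contr_def by (auto split: if_splits)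
  have cF: "a*F+r \<noteq> F" using d pu by metis
  have dF: "b*F+s \<noteq> F" using d pv by metis
  define c where "c = a*F+r-F"
  define dd where "dd = b*F+s-F"
  define k where "k = b/a"
  have c0: "c \<noteq> 0" using cF unfolding c_def by simp
  have bk: "b = a*k" using a unfolding k_def by simp
  have r: "r = c + F - a*F" unfolding c_def by simp
  have s: "s = dd + F - b*F" unfolding dd_def by simp
  have e1: "dd = c*(1+k)"
  proof -
    have "a*dd = a*(c*(1+k))" using su a unfolding u_def r s bk by (simp add: field_simps)
    then show ?thesis using a by simp
  qed
  have k0: "k \<noteq> 0" using b bk by auto
  have e2: "c = dd*(1+1/k)"
  proof -
    have "a*(c*k) = a*(dd*(1+k))" using sv a b k0 unfolding v_def r s bk by (simp add: field_simps)
    then have "c*k = dd*(1+k)" using a by simp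
    then show ?thesis using k0 by (simp add: field_simps)
  qed
  have "c = c*((1+k)*(1+1/k))" using e1 e2 by (metis mult.assoc)
  then have "(1+k)*(1+1/k) = 1" using c0 by (metis mult.right_neutral mult_left_cancel)
  then have kk: "k^2+k+1 = 0" using k0 by (simp add: field_simps power2_eq_square)
  have "s = (a - k)*F + r*(1+k)" unfolding s e1 c_def bk
    by (simp add: algebra_simps)
  then show ?thesis using cF kk unfolding k_def by simp
qed


lemma core_bwd:
  fixes a k r F :: "'a::{field,finite}"
  assumes a: "a \<noteq> 0" and three: "(3::'a) \<noteq> 0" and cF: "a*F+r \<noteq> F"
    and kk: "k^2+k+1 = 0"
  defines "b \<equiv> a*k" and "s \<equiv> (a-k)*F + r*(1+k)"
  shows "card {x. contr F (\<lambda>x. a*x+r) x = contr F (\<lambda>x. b*x+s) x} = 4 \<and> b \<noteq> 0 \<and> a \<noteq> b"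
proof -
  have k0: "k \<noteq> 0" using kk by auto
  have k1: "k \<noteq> 1" using kk three by auto
  have km: "1 + k \<noteq> 0"
  proof
    assume "1 + k = 0" then have "k = -1" by (simp add: add_eq_0_iff)
    then show False using kk by simp
  qed
  have b: "b \<noteq> 0" using a k0 unfolding b_def by simp
  have ab: "a \<noteq> b" using a k1 unfolding b_def by simp
  define A where "A = {x. contr F (\<lambda>x. a*x+r) x = contr F (\<lambda>x. b*x+s) x}"
  define u where "u = (F-r)/a"
  define v where "v = (F-s)/b"
  define x0 where "x0 = (s-r)/(a-b)"
  define c where "c = a*F+r-F"
  have c0: "c \<noteq> 0" using cF unfolding c_def by simp
  have r: "r = c + F - a*F" unfolding c_def by simp
  have sF: "b*F+s = F + c*(1+k)" unfolding b_def s_def c_def by (simp add: algebra_simps)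
  have pu: "\<And>x. a*x+r = F \<longleftrightarrow> x = u" using a unfolding u_def by (auto simp: field_simps)
  have pv: "\<And>x. b*x+s = F \<longleftrightarrow> x = v" using b unfolding v_def by (auto simp: field_simps)
  have px: "a*x0+r = b*x0+s" using ab unfolding x0_def by (simp add: field_simps)
  have su: "b*u+s = a*F+r" using a unfolding u_def b_def s_def by (simp add: field_simps)
  have sv: "a*v+r = b*F+s"
  proof -
    have i1: "k*(b*F+s) - (F - s + r*k) = (a*F - F + r)*(k^2+k+1)"
      unfolding b_def s_def by (simp add: algebra_simps power2_eq_square)
    have i2: "k*(a*v+r) = F - s + r*k"
      using a k0 unfolding v_def b_def by (simp add: field_simps)
    have "k*(a*v+r) = k*(b*F+s)" using i1 i2 kk by simp
    then show ?thesis using k0 by simp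
  qed
  have uF: "u \<noteq> F" using pu cF by metis
  have vF: "v \<noteq> F" using pv sF c0 km by (metis add_cancel_left_right mult_eq_0_iff)
  have uv: "u \<noteq> v"
  proof
    assume "u = v"
    then have "b*u+s = F" using pv by simp
    then show False using su cF by simp
  qed
  have x0F: "x0 \<noteq> F"
  proof
    assume "x0 = F"
    then have "a*F+r = b*F+s" using px by simp
    moreover have "a*F+r = F + c" unfolding c_def by simp
    ultimately have "F + c = F + c*(1+k)" using sF by simp
    then have "c = c*(1+k)" by simp
    then have "c*k = 0" by (simp add: algebra_simps)
    then show False using c0 k0 by simp
  qed
  have x0u: "x0 \<noteq> u"
  proof
    assume "x0 = u"
    then have "b*u+s = F" using px pu by metis
    then show False using pv uv by simp
  qed
  have x0v: "x0 \<noteq> v"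
  proof
    assume "x0 = v"
    then have "a*v+r = F" using px pv by metis
    then show False using pu uv by simp
  qed
  have inA: "{F,u,v,x0} \<subseteq> A"
  proof -
    have "F \<in> A" unfolding A_def contr_def by simp
    moreover have "u \<in> A" unfolding A_def contr_def using uF uv pu pv su by auto
    moreover have "v \<in> A" unfolding A_def contr_def using vF uv pu pv sv by auto
    moreover have "x0 \<in> A" unfolding A_def contr_def using x0F x0u x0v pu pv px by auto
    ultimately show ?thesis by auto
  qed
  have "A \<subseteq> {F,u,v} \<union> {x. a*x+r = b*x+s}" unfolding A_def u_def v_def using A_sub[OF a b] .
  moreover have "{x. a*x+r = b*x+s} = {x0}" using ab unfolding x0_def by (auto simp: field_simps)
  ultimately have "A = {F,u,v,x0}" using inA by auto
  then have "card A = 4" using uF vF x0F uv x0u x0v by auto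
  then show ?thesis using b ab unfolding A_def by simp
qed


lemma aff_eq: "((\<lambda>x. a*x+r) = (\<lambda>x. b*x+(s::'a::field))) \<longleftrightarrow> a = b \<and> r = s"
proof
  assume h: "(\<lambda>x. a*x+r) = (\<lambda>x. b*x+s)"
  have "r = s" using fun_cong[OF h, of 0] by simp
  moreover have "a + r = b + s" using fun_cong[OF h, of 1] by simp
  ultimately show "a = b \<and> r = s" by simp
qed simp

lemma roots:
  fixes k t1 :: "'a::field"
  assumes "k^2+k+1 = 0" "t1^2+t1+1 = 0"
  shows "k = t1 \<or> k = inverse t1"
proof -
  have t0: "t1 \<noteq> 0" using assms(2) by auto
  have e: "k^2+k = t1^2+t1" using assms by (metis add_right_cancel)
  have "(k - t1)*(k + t1 + 1) = (k^2+k) - (t1^2+t1)" by (simp add: algebra_simps power2_eq_square)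
  with e have "(k - t1)*(k + t1 + 1) = 0" by simp
  then have "k - t1 = 0 \<or> k + t1 + 1 = 0" by simp
  moreover have "k = -t1 - 1" if "k + t1 + 1 = 0"
  proof -
    have "k = (k + t1 + 1) - t1 - 1" by simp
    then show ?thesis using that by simp
  qed
  ultimately have "k = t1 \<or> k = -t1 - 1" by auto
  moreover have "inverse t1 = -t1 - 1"
  proof -
    have "t1 * (-t1 - 1) = -(t1^2+t1+1) + 1" by (simp add: algebra_simps power2_eq_square)
    then have "t1 * (-t1 - 1) = 1" using assms(2) by simp
    then show ?thesis using t0 by (metis inverse_unique)
  qed
  ultimately show ?thesis by auto
qed

lemma inv_root:
  fixes t1 :: "'a::field"
  assumes "t1^2+t1+1 = 0"
  shows "(inverse t1)^2 + inverse t1 + 1 = 0"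
proof -
  have t0: "t1 \<noteq> 0" using assms by auto
  have "(inverse t1)^2 + inverse t1 + 1 = (t1^2+t1+1) / t1^2" using t0
    by (simp add: field_simps power2_eq_square)
  then show ?thesis using assms by simp
qed

lemma adj_char:
  fixes F t1 a r :: "'a::{field,finite}"
  assumes q: "card (UNIV :: 'a set) mod 3 = 1"
    and t: "t1 ^ 2 + t1 + 1 = 0" and a: "a \<noteq> 0" and cF: "a*F+r \<noteq> F"
  shows "CA_adj F (\<lambda>x. a * x + r) \<sigma> \<longleftrightarrow>
    \<sigma> = (\<lambda>x. a * t1 * x + (a - t1) * F + r * (1 + t1)) \<or>
    \<sigma> = (\<lambda>x. a * inverse t1 * x + (a - inverse t1) * F + r * (1 + inverse t1))"
proof -
  have three: "(3::'a) \<noteq> 0" using three_nz[OF q] .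
  have "card {0::'a, 1} \<le> card (UNIV::'a set)" by (rule card_mono) auto
  then have "card (UNIV::'a set) \<ge> 2" by simp
  moreover have "\<And>n::nat. n mod 3 = 1 \<Longrightarrow> n \<ge> 2 \<Longrightarrow> n \<ge> 4" by presburger
  ultimately have q4: "card (UNIV::'a set) \<ge> 4" using q by blast
  have bw: "CA_adj F (\<lambda>x. a * x + r) (\<lambda>x. (a*k) * x + ((a - k) * F + r * (1 + k)))"
    if kk: "k^2+k+1 = 0" for k
  proof -
    have h: "card {x. contr F (\<lambda>x. a*x+r) x = contr F (\<lambda>x. (a*k)*x+((a - k) * F + r * (1 + k))) x} = 4
       \<and> a*k \<noteq> 0 \<and> a \<noteq> a*k" using core_bwd[OF a three cF kk] by simp
    have p1: "(\<lambda>x. a * x + r) \<in> AGL1" using a unfolding AGL1_def by blast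
    have p2: "(\<lambda>x. (a*k) * x + ((a - k) * F + r * (1 + k))) \<in> AGL1" using h unfolding AGL1_def by blast
    have p3: "(\<lambda>x. a * x + r) \<noteq> (\<lambda>x. (a*k) * x + ((a - k) * F + r * (1 + k)))"
      using h aff_eq by metis
    show ?thesis unfolding CA_adj_def hd_eq using p1 p2 p3 h by simp
  qed
  show ?thesis
  proof
    assume adj: "CA_adj F (\<lambda>x. a * x + r) \<sigma>"
    then obtain b s where b: "b \<noteq> 0" and \<sigma>: "\<sigma> = (\<lambda>x. b*x+s)" unfolding CA_adj_def AGL1_def by auto
    have ne: "\<not>(a = b \<and> r = s)" using adj \<sigma> unfolding CA_adj_def by auto
    have "card (UNIV::'a set) - card {x. contr F (\<lambda>x. a*x+r) x = contr F (\<lambda>x. b*x+s) x} = card (UNIV::'a set) - 4"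
    proof -
      have "hd (contr F (\<lambda>x. a * x + r)) (contr F \<sigma>) = card (UNIV::'a set) - 4"
        using adj unfolding CA_adj_def by blast
      then show ?thesis unfolding hd_eq \<sigma> by linarith
    qed
    moreover have "card {x. contr F (\<lambda>x. a*x+r) x = contr F (\<lambda>x. b*x+s) x} \<le> card (UNIV::'a set)"
      by (rule card_mono) auto
    ultimately have c4: "card {x. contr F (\<lambda>x. a*x+r) x = contr F (\<lambda>x. b*x+s) x} = 4" using q4 by linarith
    define k where "k = b/a"
    have f: "k^2+k+1 = 0" "s = (a - k)*F + r*(1+k)" using core_fwd[OF a b ne c4] unfolding k_def by auto
    have bk: "b = a*k" using a unfolding k_def by simp
    have "\<sigma> = (\<lambda>x. (a*k)*x + ((a - k)*F + r*(1+k)))" using \<sigma> bk f by simp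
    then show "\<sigma> = (\<lambda>x. a * t1 * x + (a - t1) * F + r * (1 + t1)) \<or>
    \<sigma> = (\<lambda>x. a * inverse t1 * x + (a - inverse t1) * F + r * (1 + inverse t1))"
      using roots[OF f(1) t] by (auto simp: add.assoc)
  next
    assume "\<sigma> = (\<lambda>x. a * t1 * x + (a - t1) * F + r * (1 + t1)) \<or>
    \<sigma> = (\<lambda>x. a * inverse t1 * x + (a - inverse t1) * F + r * (1 + inverse t1))"
    then show "CA_adj F (\<lambda>x. a * x + r) \<sigma>"
      using bw[OF t] bw[OF inv_root[OF t]] by (auto simp: add.assoc)
  qed
qed


lemma adj_cF:
  fixes F a r :: "'a::{field,finite}"
  assumes q: "card (UNIV :: 'a set) mod 3 = 1" and a: "a \<noteq> 0"
    and adj: "CA_adj F (\<lambda>x. a * x + r) \<sigma>"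
  shows "a*F+r \<noteq> F"
proof -
  have "card {0::'a, 1} \<le> card (UNIV::'a set)" by (rule card_mono) auto
  then have "card (UNIV::'a set) \<ge> 2" by simp
  moreover have "\<And>n::nat. n mod 3 = 1 \<Longrightarrow> n \<ge> 2 \<Longrightarrow> n \<ge> 4" by presburger
  ultimately have q4: "card (UNIV::'a set) \<ge> 4" using q by blast
  obtain b s where b: "b \<noteq> 0" and \<sigma>: "\<sigma> = (\<lambda>x. b*x+s)" using adj unfolding CA_adj_def AGL1_def by auto
  have ne: "\<not>(a = b \<and> r = s)" using adj \<sigma> unfolding CA_adj_def by auto
  have "card (UNIV::'a set) - card {x. contr F (\<lambda>x. a*x+r) x = contr F (\<lambda>x. b*x+s) x} = card (UNIV::'a set) - 4"
  proof -
    have "hd (contr F (\<lambda>x. a * x + r)) (contr F \<sigma>) = card (UNIV::'a set) - 4"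
      using adj unfolding CA_adj_def by blast
    then show ?thesis unfolding hd_eq \<sigma> by linarith
  qed
  moreover have "card {x. contr F (\<lambda>x. a*x+r) x = contr F (\<lambda>x. b*x+s) x} \<le> card (UNIV::'a set)"
    by (rule card_mono) auto
  ultimately have c4: "card {x. contr F (\<lambda>x. a*x+r) x = contr F (\<lambda>x. b*x+s) x} = 4" using q4 by linarith
  show ?thesis using core_fwd[OF a b ne c4] by simp
qed

theorem lemma5:
  fixes F t1 a r :: "'a::{field,finite}"
  assumes "card (UNIV :: 'a set) mod 3 = 1"
    and "t1 ^ 2 + t1 + 1 = 0"
    and "a \<noteq> 0"
    and "\<exists>\<sigma>. CA_adj F (\<lambda>x. a * x + r) \<sigma>"
  shows "{\<sigma>. CA_adj F (\<lambda>x. a * x + r) \<sigma>} =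
           {(\<lambda>x. a * t1 * x + (a - t1) * F + r * (1 + t1)),
            (\<lambda>x. a * inverse t1 * x + (a - inverse t1) * F + r * (1 + inverse t1))}
       \<and> card {\<sigma>. CA_adj F (\<lambda>x. a * x + r) \<sigma>} = 2"
proof -
  obtain \<sigma> where "CA_adj F (\<lambda>x. a * x + r) \<sigma>" using assms(4) by blast
  then have cF: "a*F+r \<noteq> F" using adj_cF[OF assms(1) assms(3)] by blast
  have eq: "{\<sigma>. CA_adj F (\<lambda>x. a * x + r) \<sigma>} =
           {(\<lambda>x. a * t1 * x + (a - t1) * F + r * (1 + t1)),
            (\<lambda>x. a * inverse t1 * x + (a - inverse t1) * F + r * (1 + inverse t1))}"
    using adj_char[OF assms(1) assms(2) assms(3) cF] by blast
  have three: "(3::'a) \<noteq> 0" using three_nz[OF assms(1)] .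
  have t0: "t1 \<noteq> 0" using assms(2) by auto
  have ne: "(\<lambda>x. a * t1 * x + (a - t1) * F + r * (1 + t1)) \<noteq>
            (\<lambda>x. a * inverse t1 * x + (a - inverse t1) * F + r * (1 + inverse t1))"
  proof
    assume h: "(\<lambda>x. a * t1 * x + (a - t1) * F + r * (1 + t1)) =
            (\<lambda>x. a * inverse t1 * x + (a - inverse t1) * F + r * (1 + inverse t1))"
    have h0: "(a - t1) * F + r * (1 + t1) = (a - inverse t1) * F + r * (1 + inverse t1)"
      using fun_cong[OF h, of 0] by simp
    have h1: "a * t1 + (a - t1) * F + r * (1 + t1) = a * inverse t1 + (a - inverse t1) * F + r * (1 + inverse t1)"
      using fun_cong[OF h, of 1] by simp
    have "a * t1 = a * inverse t1" using h0 h1 by (simp add: add.assoc)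
    then have ti: "t1 = inverse t1" using assms(3) by simp
    then have "t1 * t1 = 1" using t0 by (metis right_inverse)
    then have "t1 = -2" using assms(2) by (simp add: power2_eq_square algebra_simps)
      (metis add.commute add_diff_cancel diff_minus_eq_add eq_neg_iff_add_eq_0 one_add_one)
    then have "(3::'a) = 0" using assms(2) by (simp add: power2_eq_square)
    then show False using three by simp
  qed
  show ?thesis using eq ne by simp
qed

end
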